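(* Let $N\ge1$ and let $\Phi\in\mathbb R_N^{\otimes 4}$ be a real self-transpose tensor, i.e. with components satisfying $\Phi_{ijkl}=\Phi_{lkji}$ for all $i,j,k,l\in\{1,\dots,N\}$, distributed according to $$\mathcal Z_{\rm ST}(\lambda)=\int\mathcal D\Phi\,e^{-S_{\rm ST}[\Phi](\lambda)},\qquad S_{\rm ST}[\Phi](\lambda)=N\Big(\frac12\sum_{ijkl}\Phi_{ijkl}\Phi_{ijkl}+\frac{\lambda}{2}\sum_{ijkl}\Phi_{ijkl}\Phi_{ikjl}\Big).$$ Then $$\frac{\mathcal Z_{\rm ST}(\lambda)}{\mathcal Z_{\rm ST}(0)}=(1+\lambda)^{-\frac12\left(\frac{N(N+1)}{2}\right)^2}(1-\lambda)^{-\frac12\left(\frac{N(N-1)}{2}\right)^2}.$$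
   Context: $\mathcal D\Phi$ is Lebesgue measure on the real vector space of self-transpose tensors (product of $d\Phi_{ijkl}$ over a set of independent components). *)

theory Defs
  imports "HOL-Analysis.Analysis"
begin

type_synonym idx4 = "nat \<times> nat \<times> nat \<times> nat"

definition Idx :: "nat \<Rightarrow> idx4 set" where
  "Idx N = {(i,j,k,l). i < N \<and> j < N \<and> k < N \<and> l < N}"

fun tr4 :: "idx4 \<Rightarrow> idx4" where
  "tr4 (i,j,k,l) = (l,k,j,i)"

text \<open>A set of independent components: one representative of each orbit of tr4.\<close>
definition IndepIdx :: "nat \<Rightarrow> idx4 set" where
  "IndepIdx N = {(i,j,k,l) \<in> Idx N. i < l \<or> (i = l \<and> j \<le> k)}"

definition ST_tensor :: "nat \<Rightarrow> (idx4 \<Rightarrow> real) \<Rightarrow> idx4 \<Rightarrow> real" where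
  "ST_tensor N x t = (if t \<in> IndepIdx N then x t else x (tr4 t))"

definition self_transpose :: "nat \<Rightarrow> (idx4 \<Rightarrow> real) \<Rightarrow> bool" where
  "self_transpose N \<Phi> \<longleftrightarrow> (\<forall>t \<in> Idx N. \<Phi> t = \<Phi> (tr4 t))"

definition S_ST :: "nat \<Rightarrow> real \<Rightarrow> (idx4 \<Rightarrow> real) \<Rightarrow> real" where
  "S_ST N lam \<Phi> = real N * ((1/2) * (\<Sum>(i,j,k,l)\<in>Idx N. \<Phi> (i,j,k,l) * \<Phi> (i,j,k,l))
      + (lam/2) * (\<Sum>(i,j,k,l)\<in>Idx N. \<Phi> (i,j,k,l) * \<Phi> (i,k,j,l)))"

text \<open>Partition function: integral over Lebesgue measure on the independent components.\<close>
definition Z_ST :: "nat \<Rightarrow> real \<Rightarrow> real" where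
  "Z_ST N lam = (\<integral>x. exp (- S_ST N lam (ST_tensor N x)) \<partial>(PiM (IndepIdx N) (\<lambda>_. lborel)))"

end

theory Submission
  imports Defs "HOL-Probability.Distributions"
begin


lemma gauss_nn:
  fixes a m :: real assumes a: "0 < a"
  shows "(\<integral>\<^sup>+x. ennreal (exp (- (a * (x - m)\<^sup>2))) \<partial>lborel) = ennreal (sqrt (pi / a))"
proof -
  define s where "s = 1 / sqrt (2 * a)"
  have s: "0 < s" using a by (simp add: s_def)
  have s2: "2 * s\<^sup>2 = 1 / a" using a by (simp add: s_def power_divide)
  have e1: "2 * pi * s\<^sup>2 = pi / a"
  proof -
    have "2 * pi * s\<^sup>2 = pi * (2 * s\<^sup>2)" by simp
    also have "\<dots> = pi / a" using s2 by simp
    finally show ?thesis .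
  qed
  have e2: "(x - m)\<^sup>2 / (2 * s\<^sup>2) = a * (x - m)\<^sup>2" for x
    using s2 a by simp
  have sp: "0 < sqrt (pi / a)" using a by simp
  have eq: "exp (- (a * (x - m)\<^sup>2)) = sqrt (pi / a) * normal_density m s x" for x
    unfolding normal_density_def e1 using sp
    by (simp only: minus_divide_left[symmetric] e2) (use a in simp)
  have "(\<integral>\<^sup>+x. ennreal (exp (- (a * (x - m)\<^sup>2))) \<partial>lborel)
      = (\<integral>\<^sup>+x. ennreal (sqrt (pi / a)) * ennreal (normal_density m s x) \<partial>lborel)"
    using sp by (intro nn_integral_cong) (simp add: eq ennreal_mult)
  also have "\<dots> = ennreal (sqrt (pi / a)) * (\<integral>\<^sup>+x. ennreal (normal_density m s x) \<partial>lborel)"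
    by (rule nn_integral_cmult) simp
  also have "(\<integral>\<^sup>+x. ennreal (normal_density m s x) \<partial>lborel) = 1"
    using s by (subst nn_integral_eq_integral) (auto simp: integral_normal_density)
  finally show ?thesis by simp
qed

lemma restrict_merge_left:
  "I \<inter> J = {} \<Longrightarrow> restrict (merge I J (x, y)) I = restrict x I"
  by (auto simp: fun_eq_iff merge_def restrict_def)

lemma restrict_merge_right:
  "I \<inter> J = {} \<Longrightarrow> L \<subseteq> J \<Longrightarrow> restrict (merge I J (x, y)) L = restrict y L"
  by (auto simp: fun_eq_iff merge_def restrict_def)

lemma nn_prod_blocks:
  fixes M :: "'i \<Rightarrow> 'a measure" and B :: "'k \<Rightarrow> 'i set" and F :: "'k \<Rightarrow> ('i \<Rightarrow> 'a) \<Rightarrow> ennreal"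
  assumes psf: "product_sigma_finite M" and "finite K"
   and fin: "\<And>k. k\<in>K \<Longrightarrow> finite (B k)" and disj: "disjoint_family_on B K"
   and meas: "\<And>k. k\<in>K \<Longrightarrow> F k \<in> borel_measurable (PiM (B k) M)"
   and loc: "\<And>k x. k\<in>K \<Longrightarrow> F k x = F k (restrict x (B k))"
  shows "(\<integral>\<^sup>+x. (\<Prod>k\<in>K. F k x) \<partial>PiM (\<Union>k\<in>K. B k) M) = (\<Prod>k\<in>K. \<integral>\<^sup>+x. F k x \<partial>PiM (B k) M)"
  using assms(2-)
proof (induction K rule: finite_induct)
  case empty
  show ?case by (simp add: PiM_empty)
next
  case (insert j K)
  let ?J = "\<Union>k\<in>K. B k"
  have mk: "(\<lambda>x. F k x) \<in> borel_measurable (PiM L M)" if "k \<in> insert j K" "B k \<subseteq> L" for k L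
  proof -
    have "(\<lambda>x. F k (restrict x (B k))) \<in> borel_measurable (PiM L M)"
      by (rule measurable_compose[OF measurable_restrict_subset[OF that(2)] insert.prems(3)[OF that(1)]])
    moreover have "F k = (\<lambda>x. F k (restrict x (B k)))"
      by (rule ext, rule insert.prems(4)[OF that(1)])
    ultimately show ?thesis by (subst \<open>F k = _\<close>)
  qed
  have dj: "B j \<inter> ?J = {}"
    using insert.prems(2) insert.hyps(2) unfolding disjoint_family_on_def by fastforce
  have finJ: "finite ?J" using insert.hyps(1) insert.prems(1) by auto
  have finj: "finite (B j)" using insert.prems(1) by auto
  have IH: "(\<integral>\<^sup>+x. (\<Prod>k\<in>K. F k x) \<partial>PiM ?J M) = (\<Prod>k\<in>K. \<integral>\<^sup>+x. F k x \<partial>PiM (B k) M)"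
  proof (rule insert.IH)
    show "disjoint_family_on B K" using insert.prems(2) by (auto intro: disjoint_family_on_mono)
    show "\<And>k. k\<in>K \<Longrightarrow> finite (B k)" using insert.prems(1) by simp
    show "\<And>k. k\<in>K \<Longrightarrow> F k \<in> borel_measurable (PiM (B k) M)" using insert.prems(3) by simp
    show "\<And>k x. k\<in>K \<Longrightarrow> F k x = F k (restrict x (B k))" by (rule insert.prems(4)) simp
  qed
  have mprod: "(\<lambda>x. \<Prod>k\<in>K. F k x) \<in> borel_measurable (PiM L M)" if "?J \<subseteq> L" for L
    using that by (intro borel_measurable_prod_ennreal mk) auto
  have mall: "(\<lambda>x. F j x * (\<Prod>k\<in>K. F k x)) \<in> borel_measurable (PiM (B j \<union> ?J) M)"
    by (intro borel_measurable_times_ennreal mk mprod) auto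
  have "(\<integral>\<^sup>+x. (\<Prod>k\<in>insert j K. F k x) \<partial>PiM (\<Union>k\<in>insert j K. B k) M)
      = (\<integral>\<^sup>+x. F j x * (\<Prod>k\<in>K. F k x) \<partial>PiM (B j \<union> ?J) M)"
    using insert.hyps by simp
  also have "\<dots> = (\<integral>\<^sup>+x. \<integral>\<^sup>+y. F j (merge (B j) ?J (x, y)) * (\<Prod>k\<in>K. F k (merge (B j) ?J (x, y))) \<partial>PiM ?J M \<partial>PiM (B j) M)"
    by (rule product_sigma_finite.product_nn_integral_fold[OF psf dj finj finJ mall])
  also have "\<dots> = (\<integral>\<^sup>+x. \<integral>\<^sup>+y. F j x * (\<Prod>k\<in>K. F k y) \<partial>PiM ?J M \<partial>PiM (B j) M)"
  proof (intro nn_integral_cong)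
    fix x y
    have "F j (merge (B j) ?J (x, y)) = F j x"
      by (metis restrict_merge_left[OF dj] insert.prems(4) insertI1)
    moreover have "F k (merge (B j) ?J (x, y)) = F k y" if "k \<in> K" for k
    proof -
      have "B k \<subseteq> ?J" using that by auto
      then show ?thesis
        by (metis restrict_merge_right[OF dj] insert.prems(4) insertI2 that)
    qed
    ultimately show "F j (merge (B j) ?J (x, y)) * (\<Prod>k\<in>K. F k (merge (B j) ?J (x, y))) = F j x * (\<Prod>k\<in>K. F k y)"
      by simp
  qed
  also have "\<dots> = (\<integral>\<^sup>+x. F j x * (\<integral>\<^sup>+y. (\<Prod>k\<in>K. F k y) \<partial>PiM ?J M) \<partial>PiM (B j) M)"
    by (intro nn_integral_cong nn_integral_cmult mprod) simp
  also have "\<dots> = (\<integral>\<^sup>+x. F j x \<partial>PiM (B j) M) * (\<integral>\<^sup>+y. (\<Prod>k\<in>K. F k y) \<partial>PiM ?J M)"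
    by (intro nn_integral_multc mk) auto
  finally show ?case using IH insert.hyps by simp
qed



fun key :: "idx4 \<Rightarrow> idx4" where "key (i,j,k,l) = (min i l, min j k, max j k, max i l)"
fun swm :: "idx4 \<Rightarrow> idx4" where "swm (i,j,k,l) = (i,k,j,l)"
definition Keys :: "nat \<Rightarrow> idx4 set" where
  "Keys N = {(a,b,c,d) \<in> Idx N. a \<le> d \<and> b \<le> c}"
definition blk :: "nat \<Rightarrow> idx4 \<Rightarrow> idx4 set" where
  "blk N k = {k, swm k} \<inter> IndepIdx N"
fun isA :: "idx4 \<Rightarrow> bool" where "isA (a,b,c,d) = (a < d \<and> b < c)"
fun coef :: "nat \<Rightarrow> idx4 \<Rightarrow> real" where
  "coef N (a,b,c,d) = (if a = d \<and> b = c then real N / 2 else real N)"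
definition Qk :: "nat \<Rightarrow> real \<Rightarrow> idx4 \<Rightarrow> (idx4 \<Rightarrow> real) \<Rightarrow> real" where
  "Qk N lam k x = (if isA k then real N * ((x k)\<^sup>2 + (x (swm k))\<^sup>2 + 2 * lam * x k * x (swm k))
     else coef N k * (1 + lam) * (x k)\<^sup>2)"

lemma Idx_eq: "Idx N = {..<N} \<times> {..<N} \<times> {..<N} \<times> {..<N}"
  by (auto simp: Idx_def)

lemma finite_Idx[simp]: "finite (Idx N)"
  by (simp add: Idx_eq)

lemma Keys_sub: "Keys N \<subseteq> Idx N"
  by (auto simp: Keys_def)

lemma finite_Keys[simp]: "finite (Keys N)"
  by (rule finite_subset[OF Keys_sub]) simp

lemma fiber_sum:
  fixes x :: "idx4 \<Rightarrow> real" and lam :: real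
  assumes k: "(a,b,c,d) \<in> Keys N"
  defines "\<Phi> \<equiv> ST_tensor N x"
  shows "(\<Sum>t\<in>{t \<in> Idx N. key t = (a,b,c,d)}. real N / 2 * (\<Phi> t * \<Phi> t + lam * (\<Phi> t * \<Phi> (swm t))))
     = Qk N lam (a,b,c,d) x"
proof -
  have lt: "a < N" "b < N" "c < N" "d < N" "a \<le> d" "b \<le> c" using k by (auto simp: Keys_def Idx_def)
  consider "a < d" "b < c" | "a < d" "b = c" | "a = d" "b < c" | "a = d" "b = c"
    using lt by linarith
  then show ?thesis
  proof cases
    case 1
    have F: "{t \<in> Idx N. key t = (a,b,c,d)} = {(a,b,c,d),(d,b,c,a),(a,c,b,d),(d,c,b,a)}"
      using lt 1 by (auto simp: Idx_def min_def max_def split: if_splits)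
    show ?thesis unfolding F using lt 1
      by (simp add: Qk_def \<Phi>_def ST_tensor_def IndepIdx_def Idx_def power2_eq_square algebra_simps)
  next
    case 2
    have F: "{t \<in> Idx N. key t = (a,b,c,d)} = {(a,b,b,d),(d,b,b,a)}"
      using lt 2 by (auto simp: Idx_def min_def max_def split: if_splits)
    show ?thesis unfolding F using lt 2
      by (simp add: Qk_def \<Phi>_def ST_tensor_def IndepIdx_def Idx_def power2_eq_square algebra_simps)
  next
    case 3
    have F: "{t \<in> Idx N. key t = (a,b,c,d)} = {(a,b,c,a),(a,c,b,a)}"
      using lt 3 by (auto simp: Idx_def min_def max_def split: if_splits)
    show ?thesis unfolding F using lt 3
      by (simp add: Qk_def \<Phi>_def ST_tensor_def IndepIdx_def Idx_def power2_eq_square algebra_simps)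
  next
    case 4
    have F: "{t \<in> Idx N. key t = (a,b,c,d)} = {(a,b,b,a)}"
      using lt 4 by (auto simp: Idx_def min_def max_def split: if_splits)
    show ?thesis unfolding F using lt 4
      by (simp add: Qk_def \<Phi>_def ST_tensor_def IndepIdx_def Idx_def power2_eq_square algebra_simps)
  qed
qed

lemma S_decomp: "S_ST N lam (ST_tensor N x) = (\<Sum>k\<in>Keys N. Qk N lam k x)"
proof -
  define \<Phi> where "\<Phi> = ST_tensor N x"
  have h1: "(\<Sum>(i,j,k,l)\<in>Idx N. \<Phi> (i,j,k,l) * \<Phi> (i,j,k,l)) = (\<Sum>t\<in>Idx N. \<Phi> t * \<Phi> t)"
    by (rule sum.cong) auto
  have h2: "(\<Sum>(i,j,k,l)\<in>Idx N. \<Phi> (i,j,k,l) * \<Phi> (i,k,j,l)) = (\<Sum>t\<in>Idx N. \<Phi> t * \<Phi> (swm t))"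
    by (rule sum.cong) auto
  have "S_ST N lam \<Phi> = (\<Sum>t\<in>Idx N. real N / 2 * (\<Phi> t * \<Phi> t + lam * (\<Phi> t * \<Phi> (swm t))))"
    unfolding S_ST_def h1 h2
    by (simp add: sum_distrib_left sum.distrib algebra_simps)
  also have "\<dots> = (\<Sum>k\<in>Keys N. \<Sum>t\<in>{t \<in> Idx N. key t = k}. real N / 2 * (\<Phi> t * \<Phi> t + lam * (\<Phi> t * \<Phi> (swm t))))"
  proof (rule sum.group[symmetric])
    show "key ` Idx N \<subseteq> Keys N" by (auto simp: Keys_def Idx_def)
  qed simp_all
  also have "\<dots> = (\<Sum>k\<in>Keys N. Qk N lam k x)"
  proof (rule sum.cong[OF refl])
    fix k assume "k \<in> Keys N"
    then show "(\<Sum>t\<in>{t \<in> Idx N. key t = k}. real N / 2 * (\<Phi> t * \<Phi> t + lam * (\<Phi> t * \<Phi> (swm t)))) = Qk N lam k x"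
      unfolding \<Phi>_def by (cases k) (simp only: fiber_sum)
  qed
  finally show ?thesis by (simp add: \<Phi>_def)
qed



lemma blk_sub: "blk N k \<subseteq> IndepIdx N" by (auto simp: blk_def)

lemma key_Keys: "k \<in> Keys N \<Longrightarrow> key k = k"
  by (cases k) (auto simp: Keys_def)

lemma key_blk: "k \<in> Keys N \<Longrightarrow> t \<in> blk N k \<Longrightarrow> key t = k"
  by (cases k) (auto simp: Keys_def blk_def)

lemma disj_blk: "disjoint_family_on (blk N) (Keys N)"
  unfolding disjoint_family_on_def using key_blk by blast

lemma UN_blk: "(\<Union>k\<in>Keys N. blk N k) = IndepIdx N"
proof
  show "(\<Union>k\<in>Keys N. blk N k) \<subseteq> IndepIdx N" using blk_sub by blast
  show "IndepIdx N \<subseteq> (\<Union>k\<in>Keys N. blk N k)"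
  proof
    fix t assume t: "t \<in> IndepIdx N"
    obtain i j k l where tt: "t = (i,j,k,l)" by (cases t) auto
    have "key t \<in> Keys N" "t \<in> blk N (key t)"
      using t unfolding tt by (auto simp: Keys_def blk_def IndepIdx_def Idx_def min_def max_def)
    then show "t \<in> (\<Union>k\<in>Keys N. blk N k)" by blast
  qed
qed

lemma blk_A: "k \<in> Keys N \<Longrightarrow> isA k \<Longrightarrow> blk N k = {k, swm k} \<and> swm k \<noteq> k"
  by (cases k) (auto simp: Keys_def blk_def IndepIdx_def Idx_def)

lemma blk_nA: "k \<in> Keys N \<Longrightarrow> \<not> isA k \<Longrightarrow> blk N k = {k}"
  by (cases k) (auto simp: Keys_def blk_def IndepIdx_def Idx_def)

lemma Qk_local: "k \<in> Keys N \<Longrightarrow> Qk N lam k x = Qk N lam k (restrict x (blk N k))"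
  by (cases "isA k") (auto simp: Qk_def blk_A blk_nA)

lemma Qk_meas: "k \<in> Keys N \<Longrightarrow> (\<lambda>x. ennreal (exp (- Qk N lam k x))) \<in> borel_measurable (PiM (blk N k) (\<lambda>_. lborel))"
proof (cases "isA k")
  case True
  assume k: "k \<in> Keys N"
  have m1: "(\<lambda>x. x k) \<in> borel_measurable (PiM (blk N k) (\<lambda>_. lborel))"
    using measurable_component_singleton[of k "blk N k" "\<lambda>_. lborel"] by (simp add: blk_A[OF k True])
  have m2: "(\<lambda>x. x (swm k)) \<in> borel_measurable (PiM (blk N k) (\<lambda>_. lborel))"
    using measurable_component_singleton[of "swm k" "blk N k" "\<lambda>_. lborel"] by (simp add: blk_A[OF k True])
  note [measurable] = m1 m2
  show ?thesis unfolding Qk_def using True by simp measurable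
next
  case False
  assume k: "k \<in> Keys N"
  have m1: "(\<lambda>x. x k) \<in> borel_measurable (PiM (blk N k) (\<lambda>_. lborel))"
    using measurable_component_singleton[of k "blk N k" "\<lambda>_. lborel"] by (simp add: blk_nA[OF k False])
  note [measurable] = m1
  show ?thesis unfolding Qk_def using False by simp measurable
qed



lemma psf_lborel: "product_sigma_finite (\<lambda>_::idx4. lborel :: real measure)"
  unfolding product_sigma_finite_def by (simp add: sigma_finite_lborel)

lemma inner_gauss:
  fixes c v lam :: real assumes c: "0 < c"
  shows "(\<integral>\<^sup>+y. ennreal (exp (- (c * (y\<^sup>2 + v\<^sup>2 + 2 * lam * y * v)))) \<partial>lborel)
       = ennreal (exp (- (c * (1 - lam\<^sup>2) * v\<^sup>2))) * ennreal (sqrt (pi / c))"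
proof -
  have eq: "exp (- (c * (y\<^sup>2 + v\<^sup>2 + 2 * lam * y * v))) = exp (- (c * (1 - lam\<^sup>2) * v\<^sup>2)) * exp (- (c * (y - (- lam * v))\<^sup>2))" for y
    by (simp add: exp_add[symmetric] power2_eq_square algebra_simps)
  have "(\<integral>\<^sup>+y. ennreal (exp (- (c * (y\<^sup>2 + v\<^sup>2 + 2 * lam * y * v)))) \<partial>lborel)
      = (\<integral>\<^sup>+y. ennreal (exp (- (c * (1 - lam\<^sup>2) * v\<^sup>2))) * ennreal (exp (- (c * (y - (- lam * v))\<^sup>2))) \<partial>lborel)"
    by (intro nn_integral_cong) (simp add: eq ennreal_mult)
  also have "\<dots> = ennreal (exp (- (c * (1 - lam\<^sup>2) * v\<^sup>2))) * (\<integral>\<^sup>+y. ennreal (exp (- (c * (y - (- lam * v))\<^sup>2))) \<partial>lborel)"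
    by (rule nn_integral_cmult) simp
  also have "\<dots> = ennreal (exp (- (c * (1 - lam\<^sup>2) * v\<^sup>2))) * ennreal (sqrt (pi / c))"
    by (simp only: gauss_nn[OF c])
  finally show ?thesis .
qed

definition jv :: "nat \<Rightarrow> real \<Rightarrow> idx4 \<Rightarrow> real" where
  "jv N lam k = (if isA k then sqrt (pi / real N) * sqrt (pi / (real N * (1 - lam\<^sup>2)))
      else sqrt (pi / (coef N k * (1 + lam))))"

lemma coef_pos: "N \<ge> 1 \<Longrightarrow> 0 < coef N k"
  by (cases k) auto

lemma blk_int:
  assumes N: "N \<ge> 1" and l: "-1 < lam" "lam < 1" and k: "k \<in> Keys N"
  shows "(\<integral>\<^sup>+x. ennreal (exp (- Qk N lam k x)) \<partial>PiM (blk N k) (\<lambda>_. lborel)) = ennreal (jv N lam k)"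
proof (cases "isA k")
  case False
  have a: "0 < coef N k * (1 + lam)" using coef_pos[OF N] l by simp
  have "(\<integral>\<^sup>+x. ennreal (exp (- Qk N lam k x)) \<partial>PiM (blk N k) (\<lambda>_. lborel))
      = (\<integral>\<^sup>+x. (\<lambda>y. ennreal (exp (- (coef N k * (1 + lam) * (y - 0)\<^sup>2)))) (x k) \<partial>PiM {k} (\<lambda>_. lborel))"
    by (simp add: blk_nA[OF k False] Qk_def False)
  also have "\<dots> = (\<integral>\<^sup>+y. ennreal (exp (- (coef N k * (1 + lam) * (y - 0)\<^sup>2))) \<partial>lborel)"
    by (rule product_sigma_finite.product_nn_integral_singleton[OF psf_lborel]) simp
  also have "\<dots> = ennreal (jv N lam k)"
    by (simp only: gauss_nn[OF a]) (simp add: jv_def False)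
  finally show ?thesis .
next
  case True
  have bk: "blk N k = insert k {swm k}" "swm k \<noteq> k" using blk_A[OF k True] by auto
  have c: "0 < real N" using N by simp
  have c2: "0 < real N * (1 - lam\<^sup>2)" using N l by (simp add: abs_square_less_1)
  let ?f = "\<lambda>x. ennreal (exp (- Qk N lam k x))"
  have mf: "?f \<in> borel_measurable (PiM (insert k {swm k}) (\<lambda>_. lborel))"
    using Qk_meas[OF k, of lam] bk by simp
  have "(\<integral>\<^sup>+x. ?f x \<partial>PiM (blk N k) (\<lambda>_. lborel))
      = (\<integral>\<^sup>+x. \<integral>\<^sup>+y. ?f (x(k := y)) \<partial>lborel \<partial>PiM {swm k} (\<lambda>_. lborel))"
    unfolding bk(1)
    by (rule product_sigma_finite.product_nn_integral_insert[OF psf_lborel _ _ mf]) (use bk in auto)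
  also have "\<dots> = (\<integral>\<^sup>+x. (\<lambda>v. ennreal (exp (- (real N * (1 - lam\<^sup>2) * v\<^sup>2))) * ennreal (sqrt (pi / real N))) (x (swm k)) \<partial>PiM {swm k} (\<lambda>_. lborel))"
  proof (intro nn_integral_cong)
    fix x :: "idx4 \<Rightarrow> real"
    have "(\<lambda>y. ?f (x(k := y))) = (\<lambda>y. ennreal (exp (- (real N * (y\<^sup>2 + (x (swm k))\<^sup>2 + 2 * lam * y * x (swm k))))))"
      using bk(2) True by (simp add: Qk_def)
    then show "(\<integral>\<^sup>+y. ?f (x(k := y)) \<partial>lborel) = (\<lambda>v. ennreal (exp (- (real N * (1 - lam\<^sup>2) * v\<^sup>2))) * ennreal (sqrt (pi / real N))) (x (swm k))"
      by (simp only: inner_gauss[OF c])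
  qed
  also have "\<dots> = (\<integral>\<^sup>+v. ennreal (exp (- (real N * (1 - lam\<^sup>2) * v\<^sup>2))) * ennreal (sqrt (pi / real N)) \<partial>lborel)"
    by (rule product_sigma_finite.product_nn_integral_singleton[OF psf_lborel]) simp
  also have "\<dots> = (\<integral>\<^sup>+v. ennreal (exp (- (real N * (1 - lam\<^sup>2) * (v - 0)\<^sup>2))) \<partial>lborel) * ennreal (sqrt (pi / real N))"
    by (simp add: nn_integral_multc)
  also have "\<dots> = ennreal (jv N lam k)"
  proof -
    have p1: "0 \<le> sqrt (pi / real N)" using c by simp
    have p2: "0 \<le> sqrt (pi / (real N * (1 - lam\<^sup>2)))" using c2 by simp
    show ?thesis
      by (simp only: gauss_nn[OF c2]) (simp add: jv_def True ennreal_mult[OF p1 p2] mult.commute)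
  qed
  finally show ?thesis .
qed



definition PP :: "nat \<Rightarrow> (nat \<times> nat) set" where "PP N = {(a,d). a \<le> d \<and> d < N}"
definition QQ :: "nat \<Rightarrow> (nat \<times> nat) set" where "QQ N = {(a,d). a < d \<and> d < N}"

lemma PP_fin: "finite (PP N)"
  by (rule finite_subset[of _ "{..<N} \<times> {..<N}"]) (auto simp: PP_def)

lemma QQ_fin: "finite (QQ N)"
  by (rule finite_subset[of _ "{..<N} \<times> {..<N}"]) (auto simp: QQ_def)

lemma card_PP: "2 * card (PP N) = N * (N + 1)"
proof (induction N)
  case 0 then show ?case by (simp add: PP_def)
next
  case (Suc N)
  have "PP (Suc N) = PP N \<union> (\<lambda>a. (a, N)) ` {..N}" by (auto simp: PP_def less_Suc_eq)
  moreover have "PP N \<inter> (\<lambda>a. (a, N)) ` {..N} = {}" by (auto simp: PP_def)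
  moreover have "card ((\<lambda>a. (a, N)) ` {..N}) = Suc N" by (subst card_image) (auto simp: inj_on_def)
  ultimately have "card (PP (Suc N)) = card (PP N) + Suc N"
    by (simp add: card_Un_disjoint PP_fin)
  then show ?case using Suc by simp
qed

lemma card_QQ: "2 * card (QQ N) = N * (N - 1)"
proof (induction N)
  case 0 then show ?case by (simp add: QQ_def)
next
  case (Suc N)
  have "QQ (Suc N) = QQ N \<union> (\<lambda>a. (a, N)) ` {..<N}" by (auto simp: QQ_def less_Suc_eq)
  moreover have "QQ N \<inter> (\<lambda>a. (a, N)) ` {..<N} = {}" by (auto simp: QQ_def)
  moreover have "card ((\<lambda>a. (a, N)) ` {..<N}) = N" by (subst card_image) (auto simp: inj_on_def)
  ultimately have "card (QQ (Suc N)) = card (QQ N) + N"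
    by (simp add: card_Un_disjoint QQ_fin)
  then show ?case using Suc by (cases N) (auto simp: algebra_simps)
qed

definition emb :: "(nat \<times> nat) \<times> (nat \<times> nat) \<Rightarrow> idx4" where
  "emb p = (fst (fst p), fst (snd p), snd (snd p), snd (fst p))"

lemma emb_inj: "inj emb"
  by (auto simp: inj_def emb_def prod_eq_iff)

lemma Keys_img: "Keys N = emb ` (PP N \<times> PP N)"
proof -
  have "Keys N \<subseteq> emb ` (PP N \<times> PP N)"
  proof
    fix k assume "k \<in> Keys N"
    then obtain a b c d where "k = (a,b,c,d)" "a \<le> d" "b \<le> c" "d < N" "c < N"
      by (auto simp: Keys_def Idx_def)
    then show "k \<in> emb ` (PP N \<times> PP N)"
      by (auto simp: emb_def PP_def image_iff intro!: bexI[of _ "((a,d),(b,c))"])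
  qed
  moreover have "emb ` (PP N \<times> PP N) \<subseteq> Keys N"
    by (auto simp: emb_def PP_def Keys_def Idx_def)
  ultimately show ?thesis by blast
qed

lemma KeysA_img: "{k \<in> Keys N. isA k} = emb ` (QQ N \<times> QQ N)"
proof -
  have "{k \<in> Keys N. isA k} \<subseteq> emb ` (QQ N \<times> QQ N)"
  proof
    fix k assume "k \<in> {k \<in> Keys N. isA k}"
    then obtain a b c d where "k = (a,b,c,d)" "a < d" "b < c" "d < N" "c < N"
      by (cases k) (auto simp: Keys_def Idx_def)
    then show "k \<in> emb ` (QQ N \<times> QQ N)"
      by (auto simp: emb_def QQ_def image_iff intro!: bexI[of _ "((a,d),(b,c))"])
  qed
  moreover have "emb ` (QQ N \<times> QQ N) \<subseteq> {k \<in> Keys N. isA k}"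
    by (auto simp: emb_def QQ_def Keys_def Idx_def)
  ultimately show ?thesis by blast
qed

lemma card_Keys: "real (card (Keys N)) = (real (N * (N + 1)) / 2)\<^sup>2"
proof -
  have "card (Keys N) = card (PP N) * card (PP N)"
    unfolding Keys_img by (subst card_image) (auto intro: inj_on_subset[OF emb_inj] simp: card_cartesian_product)
  moreover have "real (N * (N + 1)) = 2 * real (card (PP N))"
    using card_PP[of N] by (metis of_nat_mult of_nat_numeral)
  ultimately show ?thesis by (simp add: power2_eq_square)
qed

lemma card_KeysA: "real (card {k \<in> Keys N. isA k}) = (real (N * (N - 1)) / 2)\<^sup>2"
proof -
  have "card {k \<in> Keys N. isA k} = card (QQ N) * card (QQ N)"
    unfolding KeysA_img by (subst card_image) (auto intro: inj_on_subset[OF emb_inj] simp: card_cartesian_product)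
  moreover have "real (N * (N - 1)) = 2 * real (card (QQ N))"
    using card_QQ[of N] by (metis of_nat_mult of_nat_numeral)
  ultimately show ?thesis by (simp add: power2_eq_square)
qed



lemma Qk_meas_real: "k \<in> Keys N \<Longrightarrow> (\<lambda>x. exp (- Qk N lam k x)) \<in> borel_measurable (PiM (blk N k) (\<lambda>_. lborel))"
proof (cases "isA k")
  case True
  assume k: "k \<in> Keys N"
  have m1: "(\<lambda>x. x k) \<in> borel_measurable (PiM (blk N k) (\<lambda>_. lborel))"
    using measurable_component_singleton[of k "blk N k" "\<lambda>_. lborel"] by (simp add: blk_A[OF k True])
  have m2: "(\<lambda>x. x (swm k)) \<in> borel_measurable (PiM (blk N k) (\<lambda>_. lborel))"
    using measurable_component_singleton[of "swm k" "blk N k" "\<lambda>_. lborel"] by (simp add: blk_A[OF k True])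
  note [measurable] = m1 m2
  show ?thesis unfolding Qk_def using True by simp measurable
next
  case False
  assume k: "k \<in> Keys N"
  have m1: "(\<lambda>x. x k) \<in> borel_measurable (PiM (blk N k) (\<lambda>_. lborel))"
    using measurable_component_singleton[of k "blk N k" "\<lambda>_. lborel"] by (simp add: blk_nA[OF k False])
  note [measurable] = m1
  show ?thesis unfolding Qk_def using False by simp measurable
qed

lemma jv_nonneg: "N \<ge> 1 \<Longrightarrow> -1 < lam \<Longrightarrow> lam < 1 \<Longrightarrow> 0 \<le> jv N lam k"
proof -
  assume N: "N \<ge> 1" and l: "-1 < lam" "lam < 1"
  have c2: "0 < real N * (1 - lam\<^sup>2)" using N l by (simp add: abs_square_less_1)
  have a: "0 < coef N k * (1 + lam)" using coef_pos[OF N] l by simp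
  show ?thesis unfolding jv_def using c2 a N by simp
qed

lemma Z_prod:
  assumes N: "N \<ge> 1" and l: "-1 < lam" "lam < 1"
  shows "Z_ST N lam = (\<Prod>k\<in>Keys N. jv N lam k)"
proof -
  have pt: "exp (- S_ST N lam (ST_tensor N x)) = (\<Prod>k\<in>Keys N. exp (- Qk N lam k x))" for x
    by (simp add: S_decomp exp_sum[symmetric] sum_negf)
  have pt2: "exp (- S_ST N lam (ST_tensor N x)) = (\<Prod>k\<in>Keys N. exp (- Qk N lam k (restrict x (blk N k))))" for x
    unfolding pt by (intro prod.cong refl) (simp only: Qk_local[symmetric])
  have meas: "(\<lambda>x. exp (- S_ST N lam (ST_tensor N x))) \<in> borel_measurable (PiM (IndepIdx N) (\<lambda>_. lborel))"
    unfolding pt2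
  proof (intro borel_measurable_prod)
    fix k assume k: "k \<in> Keys N"
    have "blk N k \<subseteq> IndepIdx N" by (rule blk_sub)
    then show "(\<lambda>x. exp (- Qk N lam k (restrict x (blk N k)))) \<in> borel_measurable (PiM (IndepIdx N) (\<lambda>_. lborel))"
      by (rule measurable_compose[OF measurable_restrict_subset Qk_meas_real[OF k]])
  qed
  have "(\<integral>\<^sup>+x. ennreal (exp (- S_ST N lam (ST_tensor N x))) \<partial>PiM (IndepIdx N) (\<lambda>_. lborel))
      = (\<integral>\<^sup>+x. (\<Prod>k\<in>Keys N. ennreal (exp (- Qk N lam k x))) \<partial>PiM (\<Union>k\<in>Keys N. blk N k) (\<lambda>_. lborel))"
    unfolding UN_blk pt by (simp add: prod_ennreal)
  also have "\<dots> = (\<Prod>k\<in>Keys N. \<integral>\<^sup>+x. ennreal (exp (- Qk N lam k x)) \<partial>PiM (blk N k) (\<lambda>_. lborel))"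
  proof (rule nn_prod_blocks[OF psf_lborel])
    show "finite (Keys N)" by simp
    show "\<And>k. k \<in> Keys N \<Longrightarrow> finite (blk N k)" by (simp add: blk_def)
    show "disjoint_family_on (blk N) (Keys N)" by (rule disj_blk)
    show "\<And>k. k \<in> Keys N \<Longrightarrow> (\<lambda>x. ennreal (exp (- Qk N lam k x))) \<in> borel_measurable (PiM (blk N k) (\<lambda>_. lborel))"
      by (rule Qk_meas)
    show "\<And>k x. k \<in> Keys N \<Longrightarrow> ennreal (exp (- Qk N lam k x)) = ennreal (exp (- Qk N lam k (restrict x (blk N k))))"
      by (simp only: Qk_local[symmetric])
  qed
  also have "\<dots> = (\<Prod>k\<in>Keys N. ennreal (jv N lam k))"
    by (intro prod.cong refl blk_int[OF N l])
  also have "\<dots> = ennreal (\<Prod>k\<in>Keys N. jv N lam k)"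
    by (rule prod_ennreal) (rule jv_nonneg[OF N l])
  finally have nn: "(\<integral>\<^sup>+x. ennreal (exp (- S_ST N lam (ST_tensor N x))) \<partial>PiM (IndepIdx N) (\<lambda>_. lborel)) = ennreal (\<Prod>k\<in>Keys N. jv N lam k)" .
  have "Z_ST N lam = enn2real (\<integral>\<^sup>+x. ennreal (exp (- S_ST N lam (ST_tensor N x))) \<partial>PiM (IndepIdx N) (\<lambda>_. lborel))"
    unfolding Z_ST_def by (rule integral_eq_nn_integral[OF meas]) simp
  also have "\<dots> = (\<Prod>k\<in>Keys N. jv N lam k)"
    unfolding nn by (rule enn2real_ennreal) (intro prod_nonneg jv_nonneg[OF N l])
  finally show ?thesis .
qed



lemma powr_mhalf: "0 < x \<Longrightarrow> x powr (-(1/2)) = 1 / sqrt x"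
proof -
  assume x: "0 < x"
  have "x powr (-(1/2)) = inverse (x powr (1/2))" by (rule powr_minus)
  also have "x powr (1/2) = sqrt x" using x by (intro powr_half_sqrt) simp
  finally show ?thesis by (simp add: inverse_eq_divide)
qed

lemma powr_pow_real: "0 < x \<Longrightarrow> (x powr a) ^ n = x powr (a * real n)"
  by (simp add: powr_realpow[symmetric] powr_powr)

lemma jv_ratio:
  assumes N: "N \<ge> 1" and l: "-1 < lam" "lam < 1"
  shows "jv N lam k / jv N 0 k = (1 + lam) powr (-(1/2)) * (if isA k then (1 - lam) powr (-(1/2)) else 1)"
proof (cases "isA k")
  case True
  have c: "0 < real N" using N by simp
  have f: "1 - lam\<^sup>2 = (1 + lam) * (1 - lam)" by (simp add: power2_eq_square algebra_simps)
  have p1: "0 < 1 + lam" "0 < 1 - lam" using l by auto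
  define s where "s = sqrt (pi / real N)"
  have s: "0 < s" using c by (simp add: s_def)
  have a: "0 < sqrt (1 + lam)" "0 < sqrt (1 - lam)" using p1 by auto
  have e: "sqrt (pi / (real N * (1 - lam\<^sup>2))) = s / (sqrt (1 + lam) * sqrt (1 - lam))"
    unfolding f s_def by (simp add: real_sqrt_divide real_sqrt_mult)
  have e0: "jv N 0 k = s * s" using True by (simp add: jv_def s_def)
  have e1: "jv N lam k = s * (s / (sqrt (1 + lam) * sqrt (1 - lam)))" using True by (simp add: jv_def s_def[symmetric] e)
  show ?thesis unfolding e0 e1 using True s a p1
    by (simp add: powr_mhalf field_simps)
next
  case False
  have c: "0 < coef N k" using coef_pos[OF N] .
  have p1: "0 < 1 + lam" using l by auto
  define s where "s = sqrt (pi / coef N k)"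
  have s: "0 < s" using c by (simp add: s_def)
  have a: "0 < sqrt (1 + lam)" using p1 by auto
  have e0: "jv N 0 k = s" using False by (simp add: jv_def s_def)
  have e1: "jv N lam k = s / sqrt (1 + lam)" using False
    by (simp add: jv_def s_def real_sqrt_divide real_sqrt_mult mult.commute)
  show ?thesis unfolding e0 e1 using False s a p1
    by (simp add: powr_mhalf field_simps)
qed

theorem proposition5p8:
  fixes N :: nat and lam :: real
  assumes "N \<ge> 1" and "-1 < lam" and "lam < 1"
  shows "Z_ST N lam / Z_ST N 0 =
    (1 + lam) powr (-(1/2) * (real (N * (N + 1)) / 2)^2) *
    (1 - lam) powr (-(1/2) * (real (N * (N - 1)) / 2)^2)"
proof -
  have p1: "0 < 1 + lam" "0 < 1 - lam" using assms by auto
  have "Z_ST N lam / Z_ST N 0 = (\<Prod>k\<in>Keys N. jv N lam k) / (\<Prod>k\<in>Keys N. jv N 0 k)"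
    using assms by (simp add: Z_prod)
  also have "\<dots> = (\<Prod>k\<in>Keys N. jv N lam k / jv N 0 k)"
    by (rule prod_dividef[symmetric])
  also have "\<dots> = (\<Prod>k\<in>Keys N. (1 + lam) powr (-(1/2)) * (if isA k then (1 - lam) powr (-(1/2)) else 1))"
    by (intro prod.cong refl jv_ratio assms)
  also have "\<dots> = ((1 + lam) powr (-(1/2))) ^ card (Keys N) * (\<Prod>k\<in>Keys N. (if isA k then (1 - lam) powr (-(1/2)) else 1))"
    by (simp add: prod.distrib)
  also have "(\<Prod>k\<in>Keys N. (if isA k then (1 - lam) powr (-(1/2)) else 1)) = ((1 - lam) powr (-(1/2))) ^ card {k \<in> Keys N. isA k}"
    by (simp add: prod.inter_filter[symmetric])
  also have "((1 + lam) powr (-(1/2))) ^ card (Keys N) = (1 + lam) powr (-(1/2) * (real (N * (N + 1)) / 2)^2)"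
    using p1 by (simp only: powr_pow_real card_Keys)
  also have "((1 - lam) powr (-(1/2))) ^ card {k \<in> Keys N. isA k} = (1 - lam) powr (-(1/2) * (real (N * (N - 1)) / 2)^2)"
    using p1 by (simp only: powr_pow_real card_KeysA)
  finally show ?thesis .
qed


end
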